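(* Let $p,q$ be positive integers with $p/q\ge 2$. If $I$ is an independent set of the Kneser graph $K_{p/q}$, then $|N(I)|\ge \frac{p-q}{q}\,|I|$, where $N(I)$ is the set of vertices adjacent to at least one vertex of $I$.
   Context: For integers $1\le q\le p$, the Kneser graph $K_{p/q}$ has as vertices all $q$-element subsets of $[p]=\{1,\dots,p\}$, two being adjacent iff they are disjoint. *)

theory Defs
  imports Complex_Main
begin

definition kneser_vertices :: "nat \<Rightarrow> nat \<Rightarrow> nat set set" where
  "kneser_vertices p q = {A. A \<subseteq> {1..p} \<and> card A = q}"

definition kneser_adj :: "nat \<Rightarrow> nat \<Rightarrow> nat set \<Rightarrow> nat set \<Rightarrow> bool" where
  "kneser_adj p q A B \<longleftrightarrow> A \<in> kneser_vertices p q \<and> B \<in> kneser_vertices p q \<and> A \<inter> B = {}"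

definition kneser_independent :: "nat \<Rightarrow> nat \<Rightarrow> nat set set \<Rightarrow> bool" where
  "kneser_independent p q I \<longleftrightarrow> I \<subseteq> kneser_vertices p q \<and>
     (\<forall>A\<in>I. \<forall>B\<in>I. \<not> kneser_adj p q A B)"

definition kneser_nbhd :: "nat \<Rightarrow> nat \<Rightarrow> nat set set \<Rightarrow> nat set set" where
  "kneser_nbhd p q I = {B. \<exists>A\<in>I. kneser_adj p q A B}"

end

theory Submission
  imports Defs "HOL-Combinatorics.Permutations"
begin


definition dj :: "nat \<Rightarrow> nat \<Rightarrow> int \<Rightarrow> int \<Rightarrow> bool" where
  "dj p q s t \<longleftrightarrow> int q \<le> (t - s) mod int p \<and> (t - s) mod int p \<le> int p - int q"

lemma res_eq:
  fixes s t c P :: int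
  assumes "0 \<le> s" "s < P" "0 \<le> t" "t < P" "(s + c) mod P = (t + c) mod P"
  shows "s = t"
proof -
  have "s mod P = t mod P" using assms(5) by (metis add_diff_cancel_right' mod_diff_left_eq)
  thus ?thesis using assms by simp
qed

lemma res_eq2:
  fixes s t c P :: int
  assumes "0 \<le> s" "s < P" "0 \<le> t" "t < P" "(s - c) mod P = (t - c) mod P"
  shows "s = t"
  using res_eq[of s P t "-c"] assms by simp

lemma katona:
  fixes F :: "int set"
  assumes F: "F \<subseteq> {0..<int p}" and q: "1 \<le> q" "2*q \<le> p"
    and inter: "\<forall>s\<in>F. \<forall>t\<in>F. \<not> dj p q s t"
  shows "card F \<le> q"
proof (cases "F = {}")
  case True then show ?thesis by simp
next
  case False
  then obtain s0 where s0: "s0 \<in> F" by blast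
  define \<phi> where "\<phi> t = (if (t - s0) mod int p < int q then (t - s0) mod int p
       else (t - s0) mod int p - (int p - int q))" for t
  have rng: "\<phi> t \<in> {0..<int q}" if "t \<in> F" for t
  proof -
    have "\<not> dj p q s0 t" using inter s0 that by blast
    moreover have "0 \<le> (t - s0) mod int p" "(t - s0) mod int p < int p" using q by auto
    ultimately show ?thesis unfolding \<phi>_def dj_def by auto
  qed
  have inj: "inj_on \<phi> F"
  proof (rule inj_onI)
    fix t t' assume t: "t \<in> F" and t': "t' \<in> F" and eq: "\<phi> t = \<phi> t'"
    have nd: "\<not> dj p q t t'" using inter t t' by blast
    have b: "0 \<le> t" "t < int p" "0 \<le> t'" "t' < int p" using F t t' by auto
    show "t = t'"
    proof (cases "(t - s0) mod int p < int q \<longleftrightarrow> (t' - s0) mod int p < int q")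
      case True
      then have "(t - s0) mod int p = (t' - s0) mod int p" using eq unfolding \<phi>_def by (auto split: if_splits)
      then show ?thesis using res_eq2 b by blast
    next
      case False
      have key: "(t' - t) mod int p = ((t' - s0) mod int p - (t - s0) mod int p) mod int p"
        by (simp add: mod_diff_eq)
      show ?thesis
      proof (cases "(t - s0) mod int p < int q")
        case True
        with False eq have "(t' - s0) mod int p - (t - s0) mod int p = int p - int q"
          unfolding \<phi>_def by auto
        with key have "(t' - t) mod int p = (int p - int q) mod int p" by (simp only:)
        also have "\<dots> = int p - int q" using q by (intro mod_pos_pos_trivial) auto
        finally have "(t' - t) mod int p = int p - int q" .
        with nd q show ?thesis unfolding dj_def by simp
      next
        case f2: False
        with False eq have "(t - s0) mod int p - (t' - s0) mod int p = int p - int q"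
          unfolding \<phi>_def by auto
        have key2: "(t - t') mod int p = ((t - s0) mod int p - (t' - s0) mod int p) mod int p"
          by (simp add: mod_diff_eq)
        have nd2: "\<not> dj p q t' t" using inter t t' by blast
        from key2 \<open>(t - s0) mod int p - (t' - s0) mod int p = int p - int q\<close>
        have "(t - t') mod int p = (int p - int q) mod int p" by (simp only:)
        also have "\<dots> = int p - int q" using q by (intro mod_pos_pos_trivial) auto
        finally have "(t - t') mod int p = int p - int q" .
        with nd2 q show ?thesis unfolding dj_def by simp
      qed
    qed
  qed
  have "card F = card (\<phi> ` F)" using inj by (simp add: card_image)
  also have "\<dots> \<le> card {0..<int q}" by (rule card_mono) (use rng in auto)
  finally show ?thesis by simp
qed

lemma shift_exists:
  fixes X :: "int set"
  assumes X: "X \<subseteq> {0..<int p}" "x0 \<in> X" "X \<noteq> {0..<int p}"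
  shows "\<exists>x\<in>X. (x + 1) mod int p \<notin> X"
proof (rule ccontr)
  assume "\<not> ?thesis"
  then have cl: "\<And>x. x \<in> X \<Longrightarrow> (x + 1) mod int p \<in> X" by blast
  have p: "int p > 0" using X by auto
  have all: "(x0 + int k) mod int p \<in> X" for k
  proof (induction k)
    case 0 then show ?case using X p by (simp add: subset_iff)
  next
    case (Suc k)
    have "(x0 + int (Suc k)) mod int p = ((x0 + int k) mod int p + 1) mod int p"
      by (metis add.assoc mod_add_left_eq of_nat_Suc add.commute)
    with cl[OF Suc] show ?case by simp
  qed
  have "{0..<int p} \<subseteq> X"
  proof
    fix y assume y: "y \<in> {0..<int p}"
    have "y = (x0 + int (nat ((y - x0) mod int p))) mod int p"
    proof -
      have "(x0 + int (nat ((y - x0) mod int p))) mod int p = (x0 + (y - x0) mod int p) mod int p"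
        using p by simp
      also have "\<dots> = y mod int p" by (simp add: mod_add_right_eq)
      also have "\<dots> = y" using y by simp
      finally show ?thesis by simp
    qed
    then show "y \<in> X" using all by metis
  qed
  with X show False by blast
qed

lemma ext_card:
  fixes F :: "int set"
  assumes F: "F \<subseteq> {0..<int p}" "F \<noteq> {}"
  shows "min p (card F + k) \<le> card {t\<in>{0..<int p}. \<exists>s\<in>F. \<exists>j\<in>{0..k}. t = (s + c + int j) mod int p}"
proof (induction k)
  case 0
  let ?E = "{t\<in>{0..<int p}. \<exists>s\<in>F. \<exists>j\<in>{0..0::nat}. t = (s + c + int j) mod int p}"
  have p: "int p > 0" using F by auto
  have "inj_on (\<lambda>s. (s + c) mod int p) F"
  proof (rule inj_onI)
    fix x y assume "x \<in> F" "y \<in> F" "(x + c) mod int p = (y + c) mod int p"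
    moreover have "0 \<le> x" "x < int p" "0 \<le> y" "y < int p" using F calculation by auto
    ultimately show "x = y" using res_eq[of x "int p" y c] by blast
  qed
  moreover have "(\<lambda>s. (s + c) mod int p) ` F \<subseteq> ?E" using p by auto
  ultimately have "card F \<le> card ?E"
    by (metis (no_types, lifting) card_image card_mono finite_atLeastLessThan_int finite_subset mem_Collect_eq subsetI)
  then show ?case by simp
next
  case (Suc k)
  define E where "E k = {t\<in>{0..<int p}. \<exists>s\<in>F. \<exists>j\<in>{0..k}. t = (s + c + int j) mod int p}" for k
  have p: "int p > 0" using F by auto
  have fin: "finite (E k)" for k unfolding E_def by (rule finite_subset[of _ "{0..<int p}"]) auto
  have sub: "E k \<subseteq> E (Suc k)" unfolding E_def by fastforce
  have shift: "(x + 1) mod int p \<in> E (Suc k)" if "x \<in> E k" for x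
  proof -
    from that obtain s j where s: "s \<in> F" "j \<le> k" "x = (s + c + int j) mod int p"
      unfolding E_def by auto
    have "(x + 1) mod int p = (s + c + int (Suc j)) mod int p"
      using s(3) mod_add_left_eq[of "s + c + int j" "int p" 1] by (simp add: ac_simps)
    then show ?thesis unfolding E_def using s p by fastforce
  qed
  have Esub: "E k \<subseteq> {0..<int p}" for k unfolding E_def by auto
  have "min p (card F + Suc k) \<le> card (E (Suc k))"
  proof (cases "E k = {0..<int p}")
    case True
    then have "E (Suc k) = {0..<int p}" using sub Esub by blast
    then show ?thesis by simp
  next
    case False
    obtain x0 where "x0 \<in> F" using F by blast
    have ex: "\<exists>s\<in>F. \<exists>j\<in>{0..k}. (x0 + c) mod int p = (s + c + int j) mod int p"
      using \<open>x0 \<in> F\<close> by force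
    have "(x0 + c) mod int p \<in> E k" unfolding E_def using p ex by simp
    from shift_exists[OF Esub this False] obtain x where x: "x \<in> E k" "(x + 1) mod int p \<notin> E k" by blast
    have "insert ((x + 1) mod int p) (E k) \<subseteq> E (Suc k)" using sub shift x by blast
    then have "card (insert ((x + 1) mod int p) (E k)) \<le> card (E (Suc k))" using fin by (intro card_mono) auto
    then have "card (E k) + 1 \<le> card (E (Suc k))" using x fin by simp
    moreover have "min p (card F + k) \<le> card (E k)" using Suc unfolding E_def .
    ultimately show ?thesis by linarith
  qed
  then show ?case unfolding E_def .
qed

lemma cyc:
  fixes F :: "int set"
  assumes F: "F \<subseteq> {0..<int p}" and q: "1 \<le> q" "2*q \<le> p"
    and inter: "\<forall>s\<in>F. \<forall>t\<in>F. \<not> dj p q s t"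
  shows "(p - q) * card F \<le> q * card {t\<in>{0..<int p}. \<exists>s\<in>F. dj p q s t}"
proof (cases "F = {}")
  case True then show ?thesis by simp
next
  case False
  let ?D = "{t\<in>{0..<int p}. \<exists>s\<in>F. dj p q s t}"
  let ?E = "{t\<in>{0..<int p}. \<exists>s\<in>F. \<exists>j\<in>{0..p - 2*q}. t = (s + int q + int j) mod int p}"
  have m: "card F \<le> q" using katona[OF F q inter] .
  have "?E \<subseteq> ?D"
  proof
    fix t assume "t \<in> ?E"
    then obtain s j where t: "0 \<le> t" "t < int p" "s \<in> F" "j \<le> p - 2*q" "t = (s + int q + int j) mod int p" by auto
    have "(t - s) mod int p = (int q + int j) mod int p"
      using t(5) by (simp add: mod_diff_left_eq)
    also have "\<dots> = int q + int j" using t(4) q by (intro mod_pos_pos_trivial) auto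
    finally have "dj p q s t" unfolding dj_def using t(4) q by auto
    then show "t \<in> ?D" using t by auto
  qed
  moreover have "finite ?D" by (rule finite_subset[of _ "{0..<int p}"]) auto
  ultimately have "card ?E \<le> card ?D" by (rule card_mono[rotated])
  moreover have "min p (card F + (p - 2*q)) \<le> card ?E"
    using ext_card[OF F False, of "p - 2*q" "int q"] by simp
  ultimately have D: "min p (card F + (p - 2*q)) \<le> card ?D" by linarith
  show ?thesis
  proof (cases "p \<le> card F + (p - 2*q)")
    case True
    then have "p \<le> card ?D" using D by simp
    have "(p - q) * card F \<le> p * q" using m by (metis diff_le_self mult_le_mono)
    also have "\<dots> \<le> q * card ?D" using \<open>p \<le> card ?D\<close> by (simp add: mult.commute)
    finally show ?thesis .
  next
    case False
    then have D2: "card F + (p - 2*q) \<le> card ?D" using D by simp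
    obtain r where r: "p = 2*q + r" using q(2) le_Suc_ex by blast
    have "r * card F \<le> r * q" using m by simp
    then have "(p - q) * card F \<le> q * (card F + (p - 2*q))"
      unfolding r by (simp add: algebra_simps)
    also have "\<dots> \<le> q * card ?D" using D2 by simp
    finally show ?thesis .
  qed
qed



definition arc :: "nat \<Rightarrow> nat \<Rightarrow> int \<Rightarrow> nat set" where
  "arc p q r = {x\<in>{1..p}. (int x - r) mod int p < int q}"

lemma arc_sub: "arc p q r \<subseteq> {1..p}" unfolding arc_def by auto

lemma arc_card:
  assumes "0 < p" "q \<le> p"
  shows "card (arc p q r) = q"
proof -
  define h where "h x = nat ((int x - r) mod int p)" for x
  have inj: "inj_on h {1..p}"
  proof (rule inj_onI)
    fix x y assume x: "x \<in> {1..p}" and y: "y \<in> {1..p}" and e: "h x = h y"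
    have "0 \<le> (int x - r) mod int p" "0 \<le> (int y - r) mod int p" using assms by simp_all
    then have "(int x - r) mod int p = (int y - r) mod int p"
      using e unfolding h_def by (simp add: eq_nat_nat_iff)
    then have "((int x - 1) - (r - 1)) mod int p = ((int y - 1) - (r - 1)) mod int p" by (simp add: algebra_simps)
    then have "int x - 1 = int y - 1" using x y res_eq2[of "int x - 1" "int p" "int y - 1" "r - 1"] by force
    then show "x = y" by simp
  qed
  have img: "h ` {1..p} = {..<p}"
  proof (rule card_subset_eq)
    show "h ` {1..p} \<subseteq> {..<p}" unfolding h_def using assms by (auto simp: nat_less_iff)
    show "card (h ` {1..p}) = card {..<p}" using inj by (simp add: card_image)
  qed simp
  have "h ` arc p q r = {..<q}"
  proof
    show "h ` arc p q r \<subseteq> {..<q}" unfolding arc_def h_def using assms by (auto simp: nat_less_iff)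
    show "{..<q} \<subseteq> h ` arc p q r"
    proof
      fix j assume j: "j \<in> {..<q}"
      then have "j \<in> h ` {1..p}" using img assms by auto
      then obtain x where x: "x \<in> {1..p}" "j = h x" by blast
      then have "x \<in> arc p q r" using j unfolding arc_def h_def by auto
      then show "j \<in> h ` arc p q r" using x by blast
    qed
  qed
  moreover have "inj_on h (arc p q r)" using inj arc_sub by (rule inj_on_subset)
  ultimately have "card (arc p q r) = card {..<q}" by (metis card_image)
  then show ?thesis by simp
qed

definition pos :: "nat \<Rightarrow> int \<Rightarrow> nat" where
  "pos p r = (if r = 0 then p else nat r)"

lemma pos_props:
  assumes "0 \<le> r" "r < int p"
  shows "pos p r \<in> {1..p}" "int (pos p r) mod int p = r"
proof -
  show "pos p r \<in> {1..p}"
  proof (cases "r = 0")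
    case True then show ?thesis using assms unfolding pos_def by simp
  next
    case False then show ?thesis using assms unfolding pos_def by auto
  qed
  show "int (pos p r) mod int p = r"
  proof (cases "r = 0")
    case True then show ?thesis unfolding pos_def by simp
  next
    case False
    then have "int (pos p r) = r" using assms unfolding pos_def by simp
    then show ?thesis using assms by simp
  qed
qed

lemma pos_mod:
  assumes "0 \<le> r" "r < int p"
  shows "(int (pos p r) - s) mod int p = (r - s) mod int p"
proof -
  have "(int (pos p r) - s) mod int p = (int (pos p r) mod int p - s) mod int p"
    by (simp only: mod_diff_left_eq)
  then show ?thesis using pos_props(2)[OF assms] by simp
qed

lemma arc_disj:
  assumes q: "1 \<le> q" "2*q \<le> p" and st: "s \<in> {0..<int p}" "t \<in> {0..<int p}"
  shows "arc p q s \<inter> arc p q t = {} \<longleftrightarrow> dj p q s t"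
proof
  assume dj: "dj p q s t"
  show "arc p q s \<inter> arc p q t = {}"
  proof (rule ccontr)
    assume "arc p q s \<inter> arc p q t \<noteq> {}"
    then obtain x where x: "x \<in> arc p q s" "x \<in> arc p q t" by blast
    define a where "a = (int x - s) mod int p"
    define b where "b = (int x - t) mod int p"
    have ab: "0 \<le> a" "a < int q" "0 \<le> b" "b < int q"
      using x q unfolding a_def b_def arc_def by auto
    have "(t - s) mod int p = (a - b) mod int p" unfolding a_def b_def
      by (simp add: mod_diff_eq)
    show False
    proof (cases "b \<le> a")
      case True
      then have "(a - b) mod int p = a - b" using ab q by (intro mod_pos_pos_trivial) auto
      with \<open>(t - s) mod int p = (a - b) mod int p\<close> dj ab show False unfolding dj_def by auto
    next
      case False
      have "(a - b) mod int p = (a - b + int p) mod int p" by simp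
      also have "\<dots> = a - b + int p" using ab q False by (intro mod_pos_pos_trivial) auto
      finally show False using \<open>(t - s) mod int p = (a - b) mod int p\<close> dj ab unfolding dj_def by auto
    qed
  qed
next
  assume e: "arc p q s \<inter> arc p q t = {}"
  show "dj p q s t"
  proof (rule ccontr)
    assume nd: "\<not> dj p q s t"
    define d where "d = (t - s) mod int p"
    have d: "0 \<le> d" "d < int p" using q unfolding d_def by auto
    show False
    proof (cases "d < int q")
      case True
      have t: "0 \<le> t" "t < int p" using st by auto
      have "(int (pos p t) - s) mod int p < int q" using pos_mod[OF t, of s] True unfolding d_def by simp
      moreover have "(int (pos p t) - t) mod int p < int q" using pos_mod[OF t, of t] q by simp
      ultimately have "pos p t \<in> arc p q s \<inter> arc p q t"
        using pos_props(1)[OF t] unfolding arc_def by blast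
      with e show False by blast
    next
      case False
      then have "d > int p - int q" using nd unfolding dj_def d_def by auto
      have "(s - t) mod int p = (- (t - s)) mod int p" by simp
      also have "\<dots> = int p - d" using False q unfolding d_def
        by (subst zmod_zminus1_eq_if) auto
      finally have "(s - t) mod int p < int q" using \<open>d > int p - int q\<close> by simp
      have s: "0 \<le> s" "s < int p" using st by auto
      have "(int (pos p s) - t) mod int p < int q" using pos_mod[OF s, of t] \<open>(s - t) mod int p < int q\<close> by simp
      moreover have "(int (pos p s) - s) mod int p < int q" using pos_mod[OF s, of s] q by simp
      ultimately have "pos p s \<in> arc p q s \<inter> arc p q t"
        using pos_props(1)[OF s] unfolding arc_def by blast
      with e show False by blast
    qed
  qed
qed



lemma perm_exists:
  assumes "finite S" "A \<subseteq> S" "B \<subseteq> S" "card A = card B"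
  shows "\<exists>\<tau>. \<tau> permutes S \<and> \<tau> ` A = B"
proof -
  obtain f where f: "bij_betw f A B"
    using finite_same_card_bij assms finite_subset by metis
  have "card (S - A) = card (S - B)" using assms by (simp add: card_Diff_subset finite_subset)
  then obtain g where g: "bij_betw g (S - A) (S - B)"
    using finite_same_card_bij assms by (metis finite_Diff)
  define \<tau> where "\<tau> x = (if x \<in> A then f x else if x \<in> S then g x else x)" for x
  have 1: "bij_betw \<tau> A B" using f by (rule bij_betw_cong[THEN iffD1, rotated]) (simp add: \<tau>_def)
  have 2: "bij_betw \<tau> (S - A) (S - B)" using g by (rule bij_betw_cong[THEN iffD1, rotated]) (simp add: \<tau>_def)
  have "bij_betw \<tau> (A \<union> (S - A)) (B \<union> (S - B))" by (rule bij_betw_combine[OF 1 2]) blast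
  moreover have "A \<union> (S - A) = S" "B \<union> (S - B) = S" using assms by auto
  ultimately have "bij_betw \<tau> S S" by simp
  then have "\<tau> permutes S" by (rule bij_imp_permutes) (use assms in \<open>auto simp: \<tau>_def\<close>)
  moreover have "\<tau> ` A = B" using 1 by (simp add: bij_betw_def)
  ultimately show ?thesis by blast
qed

definition TT :: "nat \<Rightarrow> nat \<Rightarrow> nat set \<Rightarrow> ((nat \<Rightarrow> nat) \<times> int) set" where
  "TT p q X = {(\<sigma>, r). \<sigma> permutes {1..p} \<and> r \<in> {0..<int p} \<and> \<sigma> ` X = arc p q r}"

lemma TT_finite: "finite (TT p q X)"
proof -
  have "TT p q X \<subseteq> {\<sigma>. \<sigma> permutes {1..p}} \<times> {0..<int p}" unfolding TT_def by auto
  moreover have "finite ({\<sigma>. \<sigma> permutes {1..p}} \<times> {0..<int p})"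
    using finite_permutations[of "{1..p}"] by simp
  ultimately show ?thesis by (rule finite_subset)
qed

lemma TT_card:
  assumes A: "A \<in> kneser_vertices p q" and B: "B \<in> kneser_vertices p q"
  shows "card (TT p q A) = card (TT p q B)"
proof -
  obtain \<tau> where \<tau>: "\<tau> permutes {1..p}" "\<tau> ` B = A"
    using perm_exists[of "{1..p}" B A] A B unfolding kneser_vertices_def by auto
  have ti: "inv \<tau> permutes {1..p}" using \<tau>(1) by (rule permutes_inv)
  have bij: "bij_betw (\<lambda>(\<sigma>, r). (\<sigma> \<circ> \<tau>, r)) (TT p q A) (TT p q B)"
  proof (rule bij_betw_byWitness[where f'="\<lambda>(\<sigma>, r). (\<sigma> \<circ> inv \<tau>, r)"])
    show "\<forall>a\<in>TT p q A. (\<lambda>(\<sigma>, r). (\<sigma> \<circ> inv \<tau>, r)) ((\<lambda>(\<sigma>, r). (\<sigma> \<circ> \<tau>, r)) a) = a"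
      using permutes_inv_o(1)[OF \<tau>(1)] by (auto simp: comp_assoc)
    show "\<forall>a\<in>TT p q B. (\<lambda>(\<sigma>, r). (\<sigma> \<circ> \<tau>, r)) ((\<lambda>(\<sigma>, r). (\<sigma> \<circ> inv \<tau>, r)) a) = a"
      using permutes_inv_o(2)[OF \<tau>(1)] by (auto simp: comp_assoc)
    show "(\<lambda>(\<sigma>, r). (\<sigma> \<circ> \<tau>, r)) ` TT p q A \<subseteq> TT p q B"
    proof clarify
      fix \<sigma> r assume "(\<sigma>, r) \<in> TT p q A"
      then have h: "\<sigma> permutes {1..p}" "r \<in> {0..<int p}" "\<sigma> ` A = arc p q r" unfolding TT_def by auto
      have "(\<sigma> \<circ> \<tau>) ` B = arc p q r" using h(3) \<tau>(2) by (metis image_comp)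
      moreover have "\<sigma> \<circ> \<tau> permutes {1..p}" using h(1) \<tau>(1) by (rule permutes_compose[rotated])
      ultimately show "(\<sigma> \<circ> \<tau>, r) \<in> TT p q B" using h(2) unfolding TT_def by simp
    qed
    have tA: "inv \<tau> ` A = B" using \<tau> by (metis image_inv_f_f permutes_inj)
    show "(\<lambda>(\<sigma>, r). (\<sigma> \<circ> inv \<tau>, r)) ` TT p q B \<subseteq> TT p q A"
    proof clarify
      fix \<sigma> r assume "(\<sigma>, r) \<in> TT p q B"
      then have h: "\<sigma> permutes {1..p}" "r \<in> {0..<int p}" "\<sigma> ` B = arc p q r" unfolding TT_def by auto
      have "(\<sigma> \<circ> inv \<tau>) ` A = arc p q r" using h(3) tA by (metis image_comp)
      moreover have "\<sigma> \<circ> inv \<tau> permutes {1..p}" using h(1) ti by (rule permutes_compose[rotated])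
      ultimately show "(\<sigma> \<circ> inv \<tau>, r) \<in> TT p q A" using h(2) unfolding TT_def by simp
    qed
  qed
  then show ?thesis by (rule bij_betw_same_card)
qed


lemma vert_arc:
  assumes "0 < p" "q \<le> p"
  shows "arc p q r \<in> kneser_vertices p q"
  using arc_sub arc_card[OF assms] unfolding kneser_vertices_def by auto

lemma sum_TT:
  assumes J: "J \<subseteq> kneser_vertices p q" and p: "0 < p" "q \<le> p"
  shows "(\<Sum>\<sigma>\<in>{\<sigma>. \<sigma> permutes {1..p}}. card {r\<in>{0..<int p}. \<exists>A\<in>J. \<sigma> ` A = arc p q r})
          = card J * card (TT p q (arc p q 0))"
proof -
  let ?P = "{\<sigma>. \<sigma> permutes {1..p}}"
  have finP: "finite ?P" using finite_permutations[of "{1..p}"] by simp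
  have finJ: "finite J"
    by (rule finite_subset[OF J], rule finite_subset[of _ "Pow {1..p}"]) (auto simp: kneser_vertices_def)
  have "(\<Sum>\<sigma>\<in>?P. card {r\<in>{0..<int p}. \<exists>A\<in>J. \<sigma> ` A = arc p q r})
        = card (SIGMA \<sigma>:?P. {r\<in>{0..<int p}. \<exists>A\<in>J. \<sigma> ` A = arc p q r})"
  proof (rule card_SigmaI[symmetric, OF finP])
    show "\<forall>\<sigma>\<in>?P. finite {r\<in>{0..<int p}. \<exists>A\<in>J. \<sigma> ` A = arc p q r}"
      by (auto intro: finite_subset[of _ "{0..<int p}"])
  qed
  also have "(SIGMA \<sigma>:?P. {r\<in>{0..<int p}. \<exists>A\<in>J. \<sigma> ` A = arc p q r}) = (\<Union>A\<in>J. TT p q A)"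
    unfolding TT_def by auto
  also have "card (\<Union>A\<in>J. TT p q A) = (\<Sum>A\<in>J. card (TT p q A))"
  proof (rule card_UN_disjoint[OF finJ])
    show "\<forall>A\<in>J. finite (TT p q A)" using TT_finite by blast
    show "\<forall>A\<in>J. \<forall>B\<in>J. A \<noteq> B \<longrightarrow> TT p q A \<inter> TT p q B = {}"
    proof (intro ballI impI)
      fix A B assume "A \<in> J" "B \<in> J" "A \<noteq> B"
      show "TT p q A \<inter> TT p q B = {}"
      proof (rule ccontr)
        assume "TT p q A \<inter> TT p q B \<noteq> {}"
        then obtain \<sigma> r where "\<sigma> permutes {1..p}" "\<sigma> ` A = arc p q r" "\<sigma> ` B = arc p q r"
          unfolding TT_def by auto
        then have "A = B" by (metis inj_image_eq_iff permutes_inj)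
        with \<open>A \<noteq> B\<close> show False by simp
      qed
    qed
  qed
  also have "\<dots> = (\<Sum>A\<in>J. card (TT p q (arc p q 0)))"
    by (rule sum.cong[OF refl], rule TT_card) (use J vert_arc[OF p] in auto)
  finally show ?thesis by simp
qed

lemma TT_pos:
  assumes "0 < p"
  shows "0 < card (TT p q (arc p q 0))"
proof -
  have "(id, 0) \<in> TT p q (arc p q 0)" using assms unfolding TT_def by auto
  then show ?thesis using TT_finite by (metis card_gt_0_iff empty_iff)
qed

lemma per_sigma:
  assumes q: "1 \<le> q" "2*q \<le> p" and I: "kneser_independent p q I"
    and \<sigma>: "\<sigma> permutes {1..p}"
  shows "(p - q) * card {r\<in>{0..<int p}. \<exists>A\<in>I. \<sigma> ` A = arc p q r}
        \<le> q * card {r\<in>{0..<int p}. \<exists>B\<in>kneser_nbhd p q I. \<sigma> ` B = arc p q r}"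
proof -
  let ?F = "{r\<in>{0..<int p}. \<exists>A\<in>I. \<sigma> ` A = arc p q r}"
  let ?G = "{r\<in>{0..<int p}. \<exists>B\<in>kneser_nbhd p q I. \<sigma> ` B = arc p q r}"
  let ?D = "{t\<in>{0..<int p}. \<exists>s\<in>?F. dj p q s t}"
  have IV: "I \<subseteq> kneser_vertices p q" using I unfolding kneser_independent_def by simp
  have inj: "inj \<sigma>" using \<sigma> by (rule permutes_inj)
  have inter: "\<forall>s\<in>?F. \<forall>t\<in>?F. \<not> dj p q s t"
  proof (intro ballI notI)
    fix s t assume s: "s \<in> ?F" and t: "t \<in> ?F" and d: "dj p q s t"
    obtain A where A: "A \<in> I" "\<sigma> ` A = arc p q s" using s by auto
    obtain A' where A': "A' \<in> I" "\<sigma> ` A' = arc p q t" using t by auto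
    have "arc p q s \<inter> arc p q t = {}" using arc_disj[OF q] s t d by auto
    then have "\<sigma> ` (A \<inter> A') = {}" using A A' inj by (simp add: image_Int)
    then have "kneser_adj p q A A'" using A A' IV unfolding kneser_adj_def by auto
    then show False using I A A' unfolding kneser_independent_def by blast
  qed
  have c1: "(p - q) * card ?F \<le> q * card ?D" by (rule cyc[OF _ q inter]) auto
  have "?D \<subseteq> ?G"
  proof
    fix t assume "t \<in> ?D"
    then obtain s where t: "t \<in> {0..<int p}" and s: "s \<in> ?F" and d: "dj p q s t" by blast
    obtain A where A: "A \<in> I" "\<sigma> ` A = arc p q s" using s by auto
    define B where "B = inv \<sigma> ` arc p q t"
    have sB: "\<sigma> ` B = arc p q t" unfolding B_def
      by (simp add: image_comp permutes_inv_o(1)[OF \<sigma>])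
    have ti: "inv \<sigma> permutes {1..p}" using \<sigma> by (rule permutes_inv)
    have "B \<subseteq> {1..p}" unfolding B_def using arc_sub permutes_in_image[OF ti] by blast
    moreover have "card B = q" unfolding B_def
      using card_image[OF inj_on_subset[OF permutes_inj[OF ti]], of "arc p q t"] arc_card[of p q t] q by simp
    ultimately have BV: "B \<in> kneser_vertices p q" unfolding kneser_vertices_def by simp
    have "arc p q s \<inter> arc p q t = {}" using arc_disj[OF q] s t d by auto
    then have "\<sigma> ` (A \<inter> B) = {}" using A sB inj by (simp add: image_Int)
    then have "kneser_adj p q A B" using A BV IV unfolding kneser_adj_def by auto
    then have "B \<in> kneser_nbhd p q I" using A unfolding kneser_nbhd_def by auto
    then show "t \<in> ?G" using t sB by auto
  qed
  moreover have "finite ?G" by (rule finite_subset[of _ "{0..<int p}"]) auto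
  ultimately have "card ?D \<le> card ?G" by (rule card_mono[rotated])
  with c1 show ?thesis by (meson le_trans mult_le_mono2)
qed

theorem mainTheorem7:
  fixes p q :: nat and I :: "nat set set"
  assumes "q \<ge> 1" and "real p / real q \<ge> 2"
    and "kneser_independent p q I"
  shows "real (card (kneser_nbhd p q I)) \<ge> (real p - real q) / real q * real (card I)"
proof -
  have qpos: "real q > 0" using assms(1) by simp
  have "2 * real q \<le> real p" using assms(2) qpos by (simp add: le_divide_eq)
  then have pq: "2*q \<le> p" by linarith
  then have p: "0 < p" "q \<le> p" using assms(1) by auto
  let ?P = "{\<sigma>. \<sigma> permutes {1..p}}"
  let ?N = "kneser_nbhd p q I"
  let ?c = "card (TT p q (arc p q 0))"
  have IV: "I \<subseteq> kneser_vertices p q" using assms(3) unfolding kneser_independent_def by simp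
  have NV: "?N \<subseteq> kneser_vertices p q" unfolding kneser_nbhd_def kneser_adj_def by auto
  have "(p - q) * (card I * ?c)
     = (p - q) * (\<Sum>\<sigma>\<in>?P. card {r\<in>{0..<int p}. \<exists>A\<in>I. \<sigma> ` A = arc p q r})"
    using sum_TT[OF IV p] by simp
  also have "\<dots> = (\<Sum>\<sigma>\<in>?P. (p - q) * card {r\<in>{0..<int p}. \<exists>A\<in>I. \<sigma> ` A = arc p q r})"
    by (rule sum_distrib_left)
  also have "\<dots> \<le> (\<Sum>\<sigma>\<in>?P. q * card {r\<in>{0..<int p}. \<exists>B\<in>?N. \<sigma> ` B = arc p q r})"
    by (rule sum_mono) (use per_sigma[OF assms(1) pq assms(3)] in auto)
  also have "\<dots> = q * (\<Sum>\<sigma>\<in>?P. card {r\<in>{0..<int p}. \<exists>B\<in>?N. \<sigma> ` B = arc p q r})"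
    by (rule sum_distrib_left[symmetric])
  also have "\<dots> = q * (card ?N * ?c)"
    using sum_TT[OF NV p] by simp
  finally have "((p - q) * card I) * ?c \<le> (q * card ?N) * ?c" by (simp add: mult.assoc)
  then have nat_ineq: "(p - q) * card I \<le> q * card ?N" using TT_pos[OF p(1)] by simp
  have "real (p - q) * real (card I) \<le> real q * real (card ?N)"
    using nat_ineq by (metis of_nat_le_iff of_nat_mult)
  then have "(real p - real q) * real (card I) \<le> real q * real (card ?N)"
    using p by (simp add: of_nat_diff)
  then show ?thesis using qpos by (simp add: divide_le_eq mult.commute mult.left_commute)
qed

end
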